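(* Let $U$ be a convex subset of the plane, let $D\subset U$ be an annulus with center $O$ and radii $0<r<R$, and let $f\colon U\to\mathbb{R}$ be convex. For $s>0$ let $C(s)$ be the circle with center $O$ and radius $s$. Then $$\operatorname{Avg}(f,D)\le\frac13\left[\frac{R}{r+R}\operatorname{Avg}\left(f,C\left(\frac{r+2R}{3}\right)\right)+\frac{r}{r+R}\operatorname{Avg}\left(f,C\left(\frac{2r+R}{3}\right)\right)\right]$$ $$\qquad+\frac23\left[\frac{r+2R}{3(r+R)}\operatorname{Avg}(f,C(R))+\frac{2r+R}{3(r+R)}\operatorname{Avg}(f,C(r))\right].$$
   Context: $\operatorname{Avg}(f,D)=\frac{1}{\operatorname{Area}(D)}\iint_D f$ is the average over the annulus with respect to area, and $\operatorname{Avg}(f,C(s))=\frac{1}{2\pi s}\int_{C(s)}f\,ds$ is the average over the circle with respect to arc length. *)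

theory Defs
  imports "HOL-Analysis.Analysis"
begin

definition annulus :: "complex \<Rightarrow> real \<Rightarrow> real \<Rightarrow> complex set" where
  "annulus c r R = {z. r \<le> cmod (z - c) \<and> cmod (z - c) \<le> R}"

definition avg_area :: "(complex \<Rightarrow> real) \<Rightarrow> complex set \<Rightarrow> real" where
  "avg_area f D = integral D f / measure lebesgue D"

text \<open>Average over the circle C(c,s) with respect to arc length:
  (1/(2 pi s)) times the arc-length integral, parametrised by t \<mapsto> c + s e^{it},
  whose speed is s.\<close>
definition avg_circle :: "(complex \<Rightarrow> real) \<Rightarrow> complex \<Rightarrow> real \<Rightarrow> real" where
  "avg_circle f c s = (1 / (2 * pi * s)) * integral {0..2*pi} (\<lambda>t. f (c + of_real s * cis t) * s)"

end

theory Submission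
  imports Defs
begin

lemma cov2:
  fixes f :: "real^2 \<Rightarrow> real" and g :: "real^2 \<Rightarrow> real^2"
  assumes S: "S \<in> sets lebesgue"
    and der_g: "\<And>x. x \<in> S \<Longrightarrow> (g has_derivative g' x) (at x within S)"
    and inj: "inj_on g S"
  shows "(\<lambda>x. \<bar>det (matrix (g' x))\<bar> * f(g x)) absolutely_integrable_on S \<and>
           integral S (\<lambda>x. \<bar>det (matrix (g' x))\<bar> * f(g x)) = b
     \<longleftrightarrow> f absolutely_integrable_on (g ` S) \<and> integral (g ` S) f = b"
proof -
  have "(\<lambda>x. \<bar>det (matrix (g' x))\<bar> *\<^sub>R vec (f(g x)) :: real ^ 1) absolutely_integrable_on S \<and>
           integral S (\<lambda>x. \<bar>det (matrix (g' x))\<bar> *\<^sub>R vec (f(g x))) = (vec b :: real ^ 1)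
         \<longleftrightarrow> (\<lambda>x. vec (f x) :: real ^ 1) absolutely_integrable_on (g ` S) \<and>
           integral (g ` S) (\<lambda>x. vec (f x)) = (vec b :: real ^ 1)"
    using assms by (intro has_absolute_integral_change_of_variables) auto
  thus ?thesis
    by (simp add: absolutely_integrable_on_1_iff integral_on_1_eq)
qed

definition Q :: "complex \<Rightarrow> real^2 \<Rightarrow> real^2" where
  "Q c x = vector [Re c, Im c] + (x$1 * cos (x$2)) *\<^sub>R axis 1 1 + (x$1 * sin (x$2)) *\<^sub>R axis 2 1"

definition Q' :: "real^2 \<Rightarrow> real^2 \<Rightarrow> real^2" where
  "Q' x h = (h$1 * cos (x$2) - x$1 * (sin (x$2) * h$2)) *\<^sub>R axis 1 1 + (h$1 * sin (x$2) + x$1 * (cos (x$2) * h$2)) *\<^sub>R axis 2 1"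

lemma Q_der: "(Q c has_derivative Q' x) (at x within S)"
  unfolding Q_def Q'_def
  by (rule derivative_eq_intros bounded_linear.has_derivative[OF bounded_linear_vec_nth] | simp)+
    (auto simp: algebra_simps)

lemma trig_aux: "cos a * (b * cos a) + b * sin a * sin a = (b::real)"
proof -
  have "cos a * (b * cos a) + b * sin a * sin a = b * (cos a * cos a + sin a * sin a)"
    by algebra
  also have "\<dots> = b" by (simp only: sin_cos_squared_add3 mult_1_right)
  finally show ?thesis .
qed

lemma det_Q': "det (matrix (Q' x)) = x$1"
  by (simp add: det_2 matrix_def Q'_def axis_def trig_aux)

definition V :: "real^2 \<Rightarrow> complex" where "V x = Complex (x$1) (x$2)"

lemma V_meas[measurable]: "V \<in> borel_measurable borel"
  unfolding V_def by (intro borel_measurable_continuous_onI continuous_intros) 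

lemma prod_Basis_2: "(\<Prod>b\<in>(Basis::(real^2) set). F b) = F (axis 1 1) * F (axis 2 1)"
proof -
  have B: "(Basis::(real^2) set) = {axis 1 1, axis 2 1}"
    by (auto simp: Basis_vec_def UNIV_2)
  have "axis 1 (1::real) \<noteq> (axis 2 1 :: real^2)" by (simp add: axis_eq_axis)
  then show ?thesis by (simp only: B) simp
qed

lemma distr_V: "distr lborel borel V = lborel"
proof (rule lborel_eqI[symmetric])
  fix l u :: complex assume le: "\<And>b. b \<in> Basis \<Longrightarrow> l \<bullet> b \<le> u \<bullet> b"
  have bx: "x \<in> box l u \<longleftrightarrow> Re l < Re x \<and> Re x < Re u \<and> Im l < Im x \<and> Im x < Im u" for x
    by (simp add: mem_box Basis_complex_def)
  have bx2: "y \<in> box a b \<longleftrightarrow> a$1 < y$1 \<and> y$1 < b$1 \<and> a$2 < y$2 \<and> y$2 < b$2" for y a b :: "real^2"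
    by (simp add: mem_box_cart forall_2)
  have pre: "V -` box l u = box (vector [Re l, Im l]) (vector [Re u, Im u])"
    by (rule set_eqI) (simp add: bx bx2 V_def)
  have le2: "Re l \<le> Re u" "Im l \<le> Im u" using le[of 1] le[of \<i>] by (auto simp: Basis_complex_def)
  have "emeasure (distr lborel borel V) (box l u) = emeasure lborel (box (vector [Re l, Im l]) (vector [Re u, Im u]) :: (real^2) set)"
    using pre by (simp add: emeasure_distr)
  also have "\<dots> = (Re u - Re l) * (Im u - Im l)"
    using le2 unfolding emeasure_lborel_box_eq prod_Basis_2
    by (auto simp add: inner_axis ennreal_mult Basis_vec_def forall_2 exhaust_2)
  also have "\<dots> = (\<Prod>b\<in>Basis. (u - l) \<bullet> b)" by (simp add: Basis_complex_def)
  finally show "emeasure (distr lborel borel V) (box l u) = (\<Prod>b\<in>Basis. (u - l) \<bullet> b)" .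
qed simp

definition W :: "real \<times> real \<Rightarrow> real^2" where "W p = fst p *\<^sub>R axis 1 1 + snd p *\<^sub>R axis 2 1"

lemma W_meas[measurable]: "W \<in> borel_measurable borel"
  unfolding W_def by (intro borel_measurable_continuous_onI continuous_intros)

lemma distr_W: "distr lborel borel W = lborel"
proof (rule lborel_eqI[symmetric])
  fix l u :: "real^2" assume le: "\<And>b. b \<in> Basis \<Longrightarrow> l \<bullet> b \<le> u \<bullet> b"
  have bx2: "y \<in> box a b \<longleftrightarrow> a$1 < y$1 \<and> y$1 < b$1 \<and> a$2 < y$2 \<and> y$2 < b$2" for y a b :: "real^2"
    by (simp add: mem_box_cart forall_2)
  have pre: "W -` box l u = box (l$1, l$2) (u$1, u$2)"
    by (rule set_eqI) (auto simp: bx2 W_def mem_box Basis_prod_def axis_def)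
  have le2: "l$1 \<le> u$1" "l$2 \<le> u$2" using le[of "axis 1 1"] le[of "axis 2 1"] by (auto simp: Basis_vec_def inner_axis)
  have "emeasure (distr lborel borel W) (box l u) = emeasure lborel (box (l$1, l$2) (u$1, u$2))"
    using pre by (simp add: emeasure_distr)
  also have "\<dots> = (u$1 - l$1) * (u$2 - l$2)"
    using le2 unfolding emeasure_lborel_box_eq
    by (auto simp add: ennreal_mult Basis_prod_def prod.union_disjoint prod.reindex inj_on_def mult.commute)
  also have "\<dots> = (\<Prod>b\<in>Basis. (u - l) \<bullet> b)" by (simp add: prod_Basis_2 inner_axis)
  finally show "emeasure (distr lborel borel W) (box l u) = (\<Prod>b\<in>Basis. (u - l) \<bullet> b)" .
qed simp

lemma VQ: "V (Q c x) = c + of_real (x$1) * cis (x$2)"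
  by (simp add: V_def Q_def complex_eq_iff axis_def)

lemma V_inj: "V x = V y \<Longrightarrow> x = y"
  by (simp add: V_def vec_eq_iff forall_2)

lemma Q_inj:
  assumes "0 < r"
  shows "inj_on (Q c) {x. r \<le> x$1 \<and> x$1 \<le> R \<and> 0 \<le> x$2 \<and> x$2 < 2*pi}"
proof (rule inj_onI)
  fix x y assume x: "x \<in> {x. r \<le> x$1 \<and> x$1 \<le> R \<and> 0 \<le> x$2 \<and> x$2 < 2*pi}"
    and y: "y \<in> {x. r \<le> x$1 \<and> x$1 \<le> R \<and> 0 \<le> x$2 \<and> x$2 < 2*pi}"
    and e: "Q c x = Q c y"
  have e2: "of_real (x$1) * cis (x$2) = of_real (y$1) * cis (y$2)"
    using arg_cong[OF e, of V] by (simp add: VQ)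
  have n: "x$1 = y$1"
    using arg_cong[OF e2, of cmod] x y assms by (simp add: norm_mult)
  have "Arg2pi (of_real (x$1) * cis (x$2)) = x$2"
    using x assms by (intro Arg2pi_unique[of "x$1" "x$2"]) (auto simp: cis_conv_exp mult.commute)
  moreover have "Arg2pi (of_real (y$1) * cis (y$2)) = y$2"
    using y assms by (intro Arg2pi_unique[of "y$1" "y$2"]) (auto simp: cis_conv_exp mult.commute)
  ultimately have "x$2 = y$2" using e2 by simp
  with n show "x = y" by (simp add: vec_eq_iff forall_2)
qed

lemma Q_img:
  assumes "0 < r"
  shows "Q c ` {x. r \<le> x$1 \<and> x$1 \<le> R \<and> 0 \<le> x$2 \<and> x$2 < 2*pi} = V -` annulus c r R"
proof (intro set_eqI iffI)
  fix y assume "y \<in> Q c ` {x. r \<le> x$1 \<and> x$1 \<le> R \<and> 0 \<le> x$2 \<and> x$2 < 2*pi}"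
  then obtain x where x: "r \<le> x$1" "x$1 \<le> R" "y = Q c x" by auto
  then show "y \<in> V -` annulus c r R"
    using assms by (simp add: VQ annulus_def norm_mult)
next
  fix y assume "y \<in> V -` annulus c r R"
  then have a: "r \<le> cmod (V y - c)" "cmod (V y - c) \<le> R" by (auto simp: annulus_def)
  define x :: "real^2" where "x = vector [cmod (V y - c), Arg2pi (V y - c)]"
  have "V (Q c x) = V y"
    unfolding VQ x_def
    by (simp add: complex_eq_iff cos_Arg2pi sin_Arg2pi)
  then have "Q c x = y" by (rule V_inj)
  moreover have "x \<in> {x. r \<le> x$1 \<and> x$1 \<le> R \<and> 0 \<le> x$2 \<and> x$2 < 2*pi}"
    using a Arg2pi[of "V y - c"] by (simp add: x_def)
  ultimately show "y \<in> Q c ` {x. r \<le> x$1 \<and> x$1 \<le> R \<and> 0 \<le> x$2 \<and> x$2 < 2*pi}" by blast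
qed

lemma Q_meas[measurable]: "Q c \<in> borel_measurable borel"
  unfolding Q_def by (intro borel_measurable_continuous_onI continuous_intros)

lemma W_nth [simp]: "W p $ 1 = fst p" "W p $ 2 = snd p"
  by (simp_all add: W_def axis_def)

lemma polar:
  fixes g :: "complex \<Rightarrow> real"
  assumes r: "0 < r" and gm[measurable]: "g \<in> borel_measurable borel"
    and gi: "set_integrable lborel (annulus c r R) g"
  shows "integrable lborel (\<lambda>p::real\<times>real. indicator ({r..R} \<times> {0..<2*pi}) p * (fst p * g (c + of_real (fst p) * cis (snd p))))"
    and "(LINT z:annulus c r R|lborel. g z) = (\<integral>p. indicator ({r..R} \<times> {0..<2*pi}) p * (fst p * g (c + of_real (fst p) * cis (snd p))) \<partial>lborel)"
proof -
  define S2 where "S2 = {x::real^2. r \<le> x$1 \<and> x$1 \<le> R \<and> 0 \<le> x$2 \<and> x$2 < 2*pi}"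
  define A where "A = annulus c r R"
  have Am[measurable]: "A \<in> sets borel" unfolding A_def annulus_def by measurable
  have S2m[measurable]: "S2 \<in> sets borel" unfolding S2_def by measurable
  define G where "G x = g (V x)" for x
  have Gm[measurable]: "G \<in> borel_measurable borel" unfolding G_def by measurable
  have ia: "integrable lborel (\<lambda>x. indicator (V -` A) x * G x)"
  proof -
    have "integrable (distr lborel borel V) (\<lambda>z. indicator A z * g z)"
      using gi unfolding set_integrable_def A_def distr_V by simp
    then show ?thesis by (subst (asm) integrable_distr_eq) (auto simp: G_def indicator_vimage)
  qed
  have ea: "(LINT z:A|lborel. g z) = (\<integral>x. indicator (V -` A) x * G x \<partial>lborel)"
    unfolding set_lebesgue_integral_def
    by (subst distr_V[symmetric]) (simp add: integral_distr G_def indicator_vimage)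
  have ab: "G absolutely_integrable_on (V -` A)"
    using ia unfolding set_integrable_def by (subst integrable_completion) auto
  have ib: "integral (V -` A) G = (\<integral>x. indicator (V -` A) x * G x \<partial>lborel)"
    using set_borel_integral_eq_integral(2)[of "V -` A" G] ia
    unfolding set_integrable_def set_lebesgue_integral_def by simp
  have S2l: "S2 \<in> sets lebesgue" by simp
  have c: "(\<lambda>x. \<bar>det (matrix (Q' x))\<bar> * G (Q c x)) absolutely_integrable_on S2 \<and>
           integral S2 (\<lambda>x. \<bar>det (matrix (Q' x))\<bar> * G (Q c x)) = integral (V -` A) G"
    using cov2[OF S2l, of "Q c" Q' G "integral (V -` A) G"] Q_der Q_inj[OF r, of c R] Q_img[OF r, of c R] ab
    unfolding S2_def A_def by simp
  define H where "H x = \<bar>x$1\<bar> * G (Q c x)" for x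
  have Hm[measurable]: "H \<in> borel_measurable borel" unfolding H_def by measurable
  have d1: "integrable lborel (\<lambda>x. indicator S2 x * H x)"
    using c unfolding det_Q' H_def[symmetric] set_integrable_def by (subst (asm) integrable_completion) auto
  have d2: "(\<integral>x. indicator S2 x * H x \<partial>lborel) = integral S2 H"
    using set_borel_integral_eq_integral(2)[of S2 H] d1
    unfolding set_integrable_def set_lebesgue_integral_def by simp
  have FW: "indicator S2 (W p) * H (W p) = indicator ({r..R} \<times> {0..<2*pi}) p * (fst p * g (c + of_real (fst p) * cis (snd p)))" for p
    using r by (cases p) (auto simp: S2_def H_def G_def VQ indicator_def)
  have "integrable (distr lborel borel W) (\<lambda>x. indicator S2 x * H x)"
    using d1 unfolding distr_W .
  then show "integrable lborel (\<lambda>p::real\<times>real. indicator ({r..R} \<times> {0..<2*pi}) p * (fst p * g (c + of_real (fst p) * cis (snd p))))"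
    by (subst (asm) integrable_distr_eq) (auto simp: FW)
  have "(\<integral>x. indicator S2 x * H x \<partial>lborel) = (\<integral>x. indicator S2 x * H x \<partial>distr lborel borel W)"
    by (simp add: distr_W)
  also have "\<dots> = (\<integral>p. indicator ({r..R} \<times> {0..<2*pi}) p * (fst p * g (c + of_real (fst p) * cis (snd p))) \<partial>lborel)"
    by (simp add: integral_distr FW)
  finally show "(LINT z:annulus c r R|lborel. g z) = (\<integral>p. indicator ({r..R} \<times> {0..<2*pi}) p * (fst p * g (c + of_real (fst p) * cis (snd p))) \<partial>lborel)"
    using ea ib c d2 unfolding A_def det_Q' H_def by simp
qed

lemma polar2:
  fixes g :: "complex \<Rightarrow> real"
  assumes r: "0 < r" and gm[measurable]: "g \<in> borel_measurable borel"
    and gi: "set_integrable lborel (annulus c r R) g"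
  shows "set_integrable lborel {r..R} (\<lambda>s. s * (LINT t:{0..<2*pi}|lborel. g (c + of_real s * cis t)))"
    and "(LINT z:annulus c r R|lborel. g z) = (LINT s:{r..R}|lborel. s * (LINT t:{0..<2*pi}|lborel. g (c + of_real s * cis t)))"
proof -
  define F where "F = (\<lambda>p::real\<times>real. indicator ({r..R} \<times> {0..<2*pi}) p * (fst p * g (c + of_real (fst p) * cis (snd p))))"
  have int: "integrable (lborel \<Otimes>\<^sub>M lborel) F"
    unfolding lborel_prod F_def by (rule polar(1)[OF r gm gi])
  have inner: "(\<integral>y. F (x, y) \<partial>lborel) = indicator {r..R} x *\<^sub>R (x * (LINT t:{0..<2*pi}|lborel. g (c + of_real x * cis t)))" for x
    unfolding F_def set_lebesgue_integral_def
    by (simp add: indicator_times mult.assoc mult.left_commute)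
  show "set_integrable lborel {r..R} (\<lambda>s. s * (LINT t:{0..<2*pi}|lborel. g (c + of_real s * cis t)))"
    using lborel_pair.integrable_fst'[OF int] unfolding inner set_integrable_def .
  have "(LINT z:annulus c r R|lborel. g z) = integral\<^sup>L (lborel \<Otimes>\<^sub>M lborel) F"
    unfolding lborel_prod F_def by (rule polar(2)[OF r gm gi])
  also have "\<dots> = (\<integral>x. (\<integral>y. F (x, y) \<partial>lborel) \<partial>lborel)"
    by (rule lborel_pair.integral_fst'[OF int, symmetric])
  also have "\<dots> = (LINT s:{r..R}|lborel. s * (LINT t:{0..<2*pi}|lborel. g (c + of_real s * cis t)))"
    unfolding inner set_lebesgue_integral_def ..
  finally show "(LINT z:annulus c r R|lborel. g z) = (LINT s:{r..R}|lborel. s * (LINT t:{0..<2*pi}|lborel. g (c + of_real s * cis t)))" .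
qed

lemma chord_le:
  assumes "convex_on {a..b} h" "a \<le> x" "x \<le> y" "y \<le> b" "x < y" "s \<in> {x..y}"
  shows "h s \<le> ((y - s) * h x + (s - x) * h y) / (y - x)"
proof -
  have "convex_on {x..y} h" using assms by (rule_tac convex_on_subset) auto
  from convex_onD_Icc'[OF this assms(6)] have "h s \<le> (h y - h x) / (y - x) * (s - x) + h x" .
  also have "\<dots> = ((y - s) * h x + (s - x) * h y) / (y - x)"
    using assms by (simp add: field_simps)
  finally show ?thesis .
qed

lemma poly_integral:
  fixes P p :: "real \<Rightarrow> real"
  assumes "a \<le> b" "\<And>x. (P has_real_derivative p x) (at x)"
  shows "integral {a..b} p = P b - P a" "p integrable_on {a..b}"
proof -
  have "(p has_integral (P b - P a)) {a..b}"
    using assms by (intro fundamental_theorem_of_calculus)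
      (auto simp: has_real_derivative_iff_has_vector_derivative[symmetric] intro: DERIV_subset)
  then show "integral {a..b} p = P b - P a" "p integrable_on {a..b}" by (auto simp: integral_unique integrable_on_def)
qed

lemma prod_ai:
  fixes p h :: "real \<Rightarrow> real"
  assumes "h absolutely_integrable_on {a..b}" "continuous_on {a..b} p"
  shows "(\<lambda>s. p s * h s) integrable_on {a..b}"
proof -
  have "(\<lambda>s. p s * h s) absolutely_integrable_on {a..b}"
    using assms by (intro absolutely_integrable_bounded_measurable_product_real continuous_imp_measurable_on_sets_lebesgue
       compact_imp_bounded compact_continuous_image) auto
  then show ?thesis using set_lebesgue_integral_eq_integral(1) by blast
qed

lemma partR:
  fixes h :: "real \<Rightarrow> real"
  assumes rR: "r < R" and cv: "convex_on {r..R} h" and ai: "h absolutely_integrable_on {r..R}"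
  shows "integral {r..R} (\<lambda>s. (s - r) * h s) \<le> (R - r)^2 * (h r / 9 + h ((r + 2*R)/3) / 6 + 2 * h R / 9)"
proof -
  define m where "m = (r + 2*R)/3"
  define d where "d = m - r"
  define e where "e = R - m"
  have m: "r < m" "m < R" using rR by (auto simp: m_def)
  have d: "d > 0" "e > 0" using m by (auto simp: d_def e_def)
  have int: "(\<lambda>s. (s - r) * h s) integrable_on {r..R}"
    by (rule prod_ai[OF ai]) (intro continuous_intros)
  have intL: "(\<lambda>s. (s - r) * h s) integrable_on {r..m}"
    by (rule integrable_on_subinterval[OF int]) (use m in auto)
  have intR: "(\<lambda>s. (s - r) * h s) integrable_on {m..R}"
    by (rule integrable_on_subinterval[OF int]) (use m in auto)
  define P1 where "P1 s = (h r * (d * (s - r)^2 / 2 - (s - r)^3 / 3) + h m * (s - r)^3 / 3) / d" for s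
  define p1 where "p1 s = (s - r) * ((d - (s - r)) * h r + (s - r) * h m) / d" for s
  have D1: "(P1 has_real_derivative p1 x) (at x)" for x
    unfolding P1_def p1_def
    by (rule derivative_eq_intros refl | simp)+ (use d in \<open>simp add: power2_eq_square power3_eq_cube eval_nat_numeral, simp add: field_simps, simp add: power2_eq_square algebra_simps\<close>)
  define P2 where "P2 s = (h m * (d * e * (s - m) + (e - d) * (s - m)^2 / 2 - (s - m)^3 / 3) + h R * (d * (s - m)^2 / 2 + (s - m)^3 / 3)) / e" for s
  define p2 where "p2 s = ((s - m) + d) * ((e - (s - m)) * h m + (s - m) * h R) / e" for s
  have D2: "(P2 has_real_derivative p2 x) (at x)" for x
    unfolding P2_def p2_def
    by (rule derivative_eq_intros refl | simp)+ (use d in \<open>simp add: power2_eq_square power3_eq_cube eval_nat_numeral, simp add: field_simps, simp add: power2_eq_square algebra_simps\<close>)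
  have "integral {r..m} (\<lambda>s. (s - r) * h s) \<le> integral {r..m} p1"
  proof (rule integral_le[OF intL poly_integral(2)[OF _ D1]])
    fix s assume s: "s \<in> {r..m}"
    have "h s \<le> ((m - s) * h r + (s - r) * h m) / (m - r)"
      by (rule chord_le[OF cv]) (use m s in auto)
    then have "(s - r) * h s \<le> (s - r) * (((m - s) * h r + (s - r) * h m) / (m - r))"
      using s by (intro mult_left_mono) auto
    then show "(s - r) * h s \<le> p1 s"
      unfolding p1_def by (simp add: d_def)
  qed (use m in auto)
  also have "\<dots> = P1 m - P1 r" using m by (intro poly_integral(1)[OF _ D1]) auto
  finally have b1: "integral {r..m} (\<lambda>s. (s - r) * h s) \<le> P1 m - P1 r" .
  have "integral {m..R} (\<lambda>s. (s - r) * h s) \<le> integral {m..R} p2"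
  proof (rule integral_le[OF intR poly_integral(2)[OF _ D2]])
    fix s assume s: "s \<in> {m..R}"
    have "h s \<le> ((R - s) * h m + (s - m) * h R) / (R - m)"
      by (rule chord_le[OF cv]) (use m s in auto)
    then have "(s - r) * h s \<le> (s - r) * (((R - s) * h m + (s - m) * h R) / (R - m))"
      using s m by (intro mult_left_mono) auto
    then show "(s - r) * h s \<le> p2 s"
      unfolding p2_def by (simp add: d_def e_def)
  qed (use m in auto)
  also have "\<dots> = P2 R - P2 m" using m by (intro poly_integral(1)[OF _ D2]) auto
  finally have b2: "integral {m..R} (\<lambda>s. (s - r) * h s) \<le> P2 R - P2 m" .
  have hm: "h m \<le> ((R - m) * h r + (m - r) * h R) / (R - r)"
    by (rule chord_le[OF cv]) (use m in auto)
  have split: "integral {r..R} (\<lambda>s. (s - r) * h s) = integral {r..m} (\<lambda>s. (s - r) * h s) + integral {m..R} (\<lambda>s. (s - r) * h s)"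
    using Henstock_Kurzweil_Integration.integral_combine[of r m R, OF _ _ int] m by simp
  have md: "m - r = d" "R - m = e" by (simp_all add: d_def e_def)
  have e1: "P1 m - P1 r = h r * d^2 / 6 + h m * d^2 / 3"
    unfolding P1_def md using d by (simp add: field_simps power2_eq_square power3_eq_cube)
  have e2: "P2 R - P2 m = h m * (e^2/6 + d*e/2) + h R * (e^2/3 + d*e/2)"
    unfolding P2_def md using d by (simp add: field_simps power2_eq_square power3_eq_cube)
  have de: "d = 2 * (R - r) / 3" "e = (R - r) / 3" by (simp_all add: d_def e_def m_def field_simps)
  have "P1 m - P1 r + (P2 R - P2 m) = (R - r)^2 * (h r * 2/27 + h m * 5/18 + h R * 4/27)"
    unfolding e1 e2 de by (simp add: field_simps power2_eq_square)
  also have "\<dots> \<le> (R - r)^2 * (h r / 9 + h m / 6 + 2 * h R / 9)"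
  proof -
    have "((R - m) * h r + (m - r) * h R) / (R - r) = ((R - r) * (h r + 2 * h R)) / (3 * (R - r))"
      using rR by (simp add: m_def field_simps)
    also have "\<dots> = (h r + 2 * h R) / 3" using rR by (simp add: field_simps)
    finally have "h m \<le> (h r + 2 * h R) / 3" using hm by linarith
    then show ?thesis by (intro mult_left_mono) auto
  qed
  finally show ?thesis using split b1 b2 unfolding m_def by linarith
qed

lemma partL:
  fixes h :: "real \<Rightarrow> real"
  assumes rR: "r < R" and cv: "convex_on {r..R} h" and ai: "h absolutely_integrable_on {r..R}"
  shows "integral {r..R} (\<lambda>s. (R - s) * h s) \<le> (R - r)^2 * (2 * h r / 9 + h ((2*r + R)/3) / 6 + h R / 9)"
proof -
  define k where "k s = h (- s)" for s
  have cvk: "convex_on {-R..-r} k"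
    unfolding convex_on_def
  proof (intro conjI ballI allI impI)
    fix x y u v :: real assume xy: "x \<in> {-R..-r}" "y \<in> {-R..-r}" and uv: "0 \<le> u" "0 \<le> v" "u + v = 1"
    have "k (u *\<^sub>R x + v *\<^sub>R y) = h (u *\<^sub>R (-x) + v *\<^sub>R (-y))" by (simp add: k_def)
    also have "\<dots> \<le> u * h (-x) + v * h (-y)"
      using cv xy uv unfolding convex_on_def by (metis atLeastAtMost_iff minus_le_iff le_minus_iff)
    finally show "k (u *\<^sub>R x + v *\<^sub>R y) \<le> u * k x + v * k y" by (simp add: k_def)
  qed simp
  have aik: "k absolutely_integrable_on {-R..-r}"
    using has_absolute_integral_reflect_real[of "{-R..-r}" "{r..R}" h "integral {r..R} h"] ai
    unfolding k_def by auto
  have "integral {-R..-r} (\<lambda>s. (s - - R) * k s) \<le> (-r - - R)^2 * (k (-R) / 9 + k ((-R + 2*(-r))/3) / 6 + 2 * k (-r) / 9)"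
    using partR[OF _ cvk aik] rR by simp
  moreover have "integral {-R..-r} (\<lambda>s. (s - - R) * k s) = integral {r..R} (\<lambda>s. (R - s) * h s)"
    using Henstock_Kurzweil_Integration.integral_reflect_real[of R r "\<lambda>s. (R - s) * h s"] by (simp add: k_def add.commute)
  moreover have "k ((-R + 2*(-r))/3) = h ((2*r + R)/3)"
  proof -
    have "-((-R + 2*(-r))/3) = (2*r + R)/3" by (simp add: field_simps)
    then show ?thesis unfolding k_def by (simp only:)
  qed
  ultimately show ?thesis by (simp add: k_def ac_simps)
qed

lemma alg_aux: "r*(R-r)*(2*a/9 + b/6 + c/9) + R*(R-r)*(a/9 + d/6 + 2*c/9) = (R-r)*((2*r+R)/9*a + r/6*b + R/6*d + (r+2*R)/9*(c::real))"
  by (simp add: field_simps)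

lemma oneD:
  fixes h :: "real \<Rightarrow> real"
  assumes r: "0 < r" and rR: "r < R" and cv: "convex_on {r..R} h" and ai: "h absolutely_integrable_on {r..R}"
  shows "integral {r..R} (\<lambda>s. s * h s) \<le> (R - r) * ((2*r + R)/9 * h r + r/6 * h ((2*r + R)/3) + R/6 * h ((r + 2*R)/3) + (r + 2*R)/9 * h R)"
proof -
  have i1: "(\<lambda>s. (R - s) * h s) integrable_on {r..R}" by (rule prod_ai[OF ai]) (intro continuous_intros)
  have i2: "(\<lambda>s. (s - r) * h s) integrable_on {r..R}" by (rule prod_ai[OF ai]) (intro continuous_intros)
  have eq: "(\<lambda>s. s * h s) = (\<lambda>s. (r / (R - r)) * ((R - s) * h s) + (R / (R - r)) * ((s - r) * h s))"
  proof (rule ext)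
    fix s
    have a: "r * ((R - s) * h s) + R * ((s - r) * h s) = (R - r) * (s * h s)" by (simp add: algebra_simps)
    have "(r / (R - r)) * ((R - s) * h s) + (R / (R - r)) * ((s - r) * h s) = (r * ((R - s) * h s) + R * ((s - r) * h s)) / (R - r)"
      by (simp add: add_divide_distrib)
    also have "\<dots> = s * h s" unfolding a using rR by simp
    finally show "s * h s = (r / (R - r)) * ((R - s) * h s) + (R / (R - r)) * ((s - r) * h s)" by simp
  qed
  have "integral {r..R} (\<lambda>s. s * h s) = (r / (R - r)) * integral {r..R} (\<lambda>s. (R - s) * h s) + (R / (R - r)) * integral {r..R} (\<lambda>s. (s - r) * h s)"
    unfolding eq
    by (subst integral_add) (use i1 i2 in \<open>auto intro: integrable_on_mult_right simp only: integral_mult_right\<close>)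
  also have "\<dots> \<le> (r / (R - r)) * ((R - r)^2 * (2 * h r / 9 + h ((2*r + R)/3) / 6 + h R / 9)) + (R / (R - r)) * ((R - r)^2 * (h r / 9 + h ((r + 2*R)/3) / 6 + 2 * h R / 9))"
    using partL[OF rR cv ai] partR[OF rR cv ai] r rR
    by (intro add_mono mult_left_mono) auto
  also have "\<dots> = r * (R - r) * (2 * h r / 9 + h ((2*r + R)/3) / 6 + h R / 9) + R * (R - r) * (h r / 9 + h ((r + 2*R)/3) / 6 + 2 * h R / 9)"
    using rR by (simp add: power2_eq_square)
  also have "\<dots> = (R - r) * ((2*r + R)/9 * h r + r/6 * h ((2*r + R)/3) + R/6 * h ((r + 2*R)/3) + (r + 2*R)/9 * h R)"
    by (rule alg_aux)
  finally show ?thesis .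
qed


lemma alg_final:
  fixes r R a b d e :: real
  assumes "0 < r" "r < R"
  shows "(R - r) * ((2*r + R)/9 * a + r/6 * b + R/6 * d + (r + 2*R)/9 * e) / (pi * (R^2 - r^2)) =
    (1/3) * (R / (r + R) * (d / (2*pi)) + r / (r + R) * (b / (2*pi)))
    + (2/3) * ((r + 2*R) / (3*(r + R)) * (e / (2*pi)) + (2*r + R) / (3*(r + R)) * (a / (2*pi)))"
proof -
  define X where "X = (2*r + R)/9 * a + r/6 * b + R/6 * d + (r + 2*R)/9 * e"
  have eq: "R^2 - r^2 = (R - r) * (r + R)" by (simp add: power2_eq_square algebra_simps)
  have nz: "R - r \<noteq> 0" "r + R \<noteq> 0" "pi \<noteq> 0" "pi * (r + R) \<noteq> 0" using assms by auto
  have "(R - r) * X / (pi * (R^2 - r^2)) = X / (pi * (r + R))"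
  proof -
    have "pi * ((R - r) * (r + R)) = (R - r) * (pi * (r + R))" by (simp add: ac_simps)
    then show ?thesis unfolding eq using nonzero_mult_divide_mult_cancel_left[OF nz(1), of X "pi * (r + R)"] by simp
  qed
  also have "\<dots> = (1/3) * (R / (r + R) * (d / (2*pi)) + r / (r + R) * (b / (2*pi)))
    + (2/3) * ((r + 2*R) / (3*(r + R)) * (e / (2*pi)) + (2*r + R) / (3*(r + R)) * (a / (2*pi)))"
  proof -
    define q where "q = r + R"
    have Rq: "R = q - r" by (simp add: q_def)
    have q0: "q \<noteq> 0" "pi \<noteq> 0" using nz by (auto simp: q_def)
    show ?thesis unfolding X_def q_def[symmetric] unfolding Rq using q0 by (simp add: field_simps)
  qed
  finally show ?thesis unfolding X_def .
qed

theorem theorem5p3: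
  fixes U :: "complex set" and c :: complex and r R :: real and f :: "complex \<Rightarrow> real"
  assumes "convex U"
    and "0 < r" and "r < R"
    and "annulus c r R \<subseteq> U"
    and "convex_on U f"
    and "f integrable_on annulus c r R"
    and "(\<lambda>t. f (c + of_real r * cis t)) integrable_on {0..2*pi}"
    and "(\<lambda>t. f (c + of_real R * cis t)) integrable_on {0..2*pi}"
  shows "avg_area f (annulus c r R) \<le>
      (1/3) * (R / (r + R) * avg_circle f c ((r + 2*R) / 3)
             + r / (r + R) * avg_circle f c ((2*r + R) / 3))
    + (2/3) * ((r + 2*R) / (3*(r + R)) * avg_circle f c R
             + (2*r + R) / (3*(r + R)) * avg_circle f c r)"
proof -
  note cvU = assms(1) and r = assms(2) and rR = assms(3) and AU = assms(4) and cvf = assms(5)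
    and fint = assms(6) and fr = assms(7) and fR = assms(8)
  define A where "A = annulus c r R"
  have mem_A: "z \<in> A \<longleftrightarrow> r \<le> cmod (z - c) \<and> cmod (z - c) \<le> R" for z
    by (simp add: A_def annulus_def)
  have circ_A: "c + of_real s * cis t \<in> A" if "r \<le> s" "s \<le> R" for s t
    using that r by (simp add: mem_A norm_mult)
  have ballU: "ball c R \<subseteq> U"
  proof
    fix z assume z: "z \<in> ball c R"
    define \<rho> where "\<rho> = cmod (z - c)"
    have \<rho>: "0 \<le> \<rho>" "\<rho> < R" using z by (auto simp: \<rho>_def dist_norm norm_minus_commute)
    define w where "w = (if z = c then 1 else (z - c) / of_real \<rho>)"
    have w1: "cmod w = 1" using \<rho> by (auto simp: w_def \<rho>_def norm_divide)
    have zw: "z = c + of_real \<rho> * w" using \<rho> by (auto simp: w_def \<rho>_def)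
    have p: "c + of_real R * w \<in> U" "c - of_real R * w \<in> U"
      using AU r rR w1 by (auto simp: annulus_def norm_mult)
    define a where "a = (R + \<rho>) / (2*R)"
    have a: "0 \<le> a" "0 \<le> 1 - a" using \<rho> rR r by (auto simp: a_def field_simps)
    have "a *\<^sub>R (c + of_real R * w) + (1 - a) *\<^sub>R (c - of_real R * w) = z"
      unfolding zw a_def using r rR by (simp add: scaleR_conv_of_real field_simps)
    moreover have "a *\<^sub>R (c + of_real R * w) + (1 - a) *\<^sub>R (c - of_real R * w) \<in> U"
      using cvU p a unfolding convex_def by auto
    ultimately show "z \<in> U" by simp
  qed
  have fc: "continuous_on (ball c R) f"
    by (rule convex_on_continuous[OF open_ball convex_on_subset[OF cvf ballU convex_ball]])
  have Acomp: "compact A"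
  proof -
    have "A = cball c R - ball c r" by (auto simp: mem_A dist_norm norm_minus_commute)
    then show ?thesis by (simp add: compact_diff)
  qed
  have Aborel[measurable]: "A \<in> sets borel" using Acomp by (simp add: compact_imp_closed)
  have Alm: "A \<in> lmeasurable" using Acomp by (rule lmeasurable_compact)
  have Kc: "cball c (r/2) \<subseteq> ball c R" using r rR by auto
  obtain M where M: "\<And>w. w \<in> cball c (r/2) \<Longrightarrow> \<bar>f w\<bar> \<le> M" "0 \<le> M"
  proof -
    have "compact (f ` cball c (r/2))"
      by (rule compact_continuous_image[OF continuous_on_subset[OF fc Kc] compact_cball])
    then obtain B where "\<forall>y\<in>f ` cball c (r/2). norm y \<le> B" by (meson bounded_iff compact_imp_bounded)
    then show ?thesis using that[of "max B 0"] by force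
  qed
  have lb: "- (2 * M * (2*R + r) / r) \<le> f z" if z: "z \<in> A" for z
  proof -
    define \<rho> where "\<rho> = cmod (z - c)"
    have \<rho>: "r \<le> \<rho>" "\<rho> \<le> R" using z by (auto simp: mem_A \<rho>_def)
    have \<rho>0: "\<rho> > 0" using \<rho> r by linarith
    define u where "u = (z - c) / of_real \<rho>"
    have u1: "cmod u = 1" using \<rho>0 by (simp add: u_def norm_divide \<rho>_def)
    have zu: "z = c + of_real \<rho> * u" using \<rho>0 by (simp add: u_def)
    define q where "q = c - of_real (r/2) * u"
    have qK: "q \<in> cball c (r/2)" using r u1 by (simp add: q_def dist_norm norm_mult)
    define l where "l = (r/2) / (\<rho> + r/2)"
    have l: "0 < l" "l \<le> 1" using r \<rho>0 by (auto simp: l_def field_simps)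
    have zU: "z \<in> U" using z AU A_def by auto
    have qU: "q \<in> U" using qK Kc ballU by auto
    have lr: "l * \<rho> - (1 - l) * (r/2) = 0" using r \<rho>0 by (simp add: l_def field_simps)
    have "(1 - l) *\<^sub>R q + l *\<^sub>R z = c + of_real (l * \<rho> - (1 - l) * (r/2)) * u"
      unfolding q_def by (subst zu) (simp add: scaleR_conv_of_real algebra_simps)
    then have cq: "(1 - l) *\<^sub>R q + l *\<^sub>R z = c" unfolding lr by simp
    have "f c \<le> (1 - l) * f q + l * f z"
      using convex_onD[OF cvf, of l q z] l zU qU cq by simp
    moreover have "f c \<ge> - M" "f q \<le> M" using M(1)[of c] M(1)[OF qK] r by auto
    moreover have "(1 - l) * f q \<le> (1 - l) * M" using l \<open>f q \<le> M\<close> by (intro mult_left_mono) auto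
    moreover have "(1 - l) * M \<le> M" using l M(2) by (simp add: algebra_simps)
    ultimately have "l * f z \<ge> - 2 * M" by linarith
    then have "f z \<ge> - 2 * M / l" using l by (simp add: field_simps)
    moreover have "2 * M / l \<le> 2 * M * (2*R + r) / r"
    proof -
      have "2 * M / l = 2 * M * (2 * \<rho> + r) / r" using r \<rho>0 by (simp add: l_def field_simps)
      also have "\<dots> \<le> 2 * M * (2*R + r) / r"
        using r \<rho> M(2) by (intro divide_right_mono mult_left_mono) auto
      finally show ?thesis .
    qed
    ultimately show ?thesis by linarith
  qed
  have fai: "f absolutely_integrable_on A"
    by (rule absolutely_integrable_absolutely_integrable_lbound[OF fint[folded A_def], of "\<lambda>_. - (2 * M * (2*R + r) / r)"])
       (use lb Alm in auto)
  define ft where "ft z = indicator (ball c R) z * f z" for z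
  have ftm[measurable]: "ft \<in> borel_measurable borel"
    using borel_measurable_continuous_on_indicator[OF _ fc] unfolding ft_def by simp
  have ft_eq: "ft z = f z" if "z \<in> A - sphere c R" for z
    using that by (auto simp: ft_def mem_A dist_norm norm_minus_commute)
  have ftai: "ft absolutely_integrable_on A"
    by (rule absolutely_integrable_spike[OF fai negligible_sphere]) (use ft_eq in auto)
  have int_ft: "integral A f = integral A ft"
    by (rule integral_spike[OF negligible_sphere]) (use ft_eq in auto)
  have ftlb: "set_integrable lborel A ft"
    using ftai unfolding set_integrable_def by (subst (asm) integrable_completion) auto
  have int_ft2: "integral A ft = (LINT z:A|lborel. ft z)"
    using set_borel_integral_eq_integral(2)[OF ftlb] by simp
  have P1: "set_integrable lborel {r..R} (\<lambda>s. s * (LINT t:{0..<2*pi}|lborel. ft (c + of_real s * cis t)))"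
    using polar2(1)[OF r ftm ftlb[unfolded A_def]] .
  have P2: "(LINT z:A|lborel. ft z) = (LINT s:{r..R}|lborel. s * (LINT t:{0..<2*pi}|lborel. ft (c + of_real s * cis t)))"
    using polar2(2)[OF r ftm ftlb[unfolded A_def]] unfolding A_def .
  define h where "h s = integral {0..2*pi} (\<lambda>t. f (c + of_real s * cis t))" for s
  have path_cont: "continuous_on UNIV (\<lambda>t. f (c + of_real s * cis t))" if "0 \<le> s" "s < R" for s
  proof (rule continuous_on_compose2[OF fc])
    show "continuous_on UNIV (\<lambda>t. c + of_real s * cis t)" by (intro continuous_intros)
    show "(\<lambda>t. c + of_real s * cis t) ` UNIV \<subseteq> ball c R" using that by (auto simp: dist_norm norm_mult)
  qed
  have inner: "(LINT t:{0..<2*pi}|lborel. ft (c + of_real s * cis t)) = h s" if s: "r \<le> s" "s < R" for s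
  proof -
    have e: "(\<lambda>t. ft (c + of_real s * cis t)) = (\<lambda>t. f (c + of_real s * cis t))"
      using s r by (auto simp: ft_def fun_eq_iff dist_norm norm_mult)
    have si: "set_integrable lborel {0..2*pi} (\<lambda>t. f (c + of_real s * cis t))"
      by (rule borel_integrable_atLeastAtMost'[OF continuous_on_subset[OF path_cont]]) (use s r in auto)
    have si2: "set_integrable lborel {0..<2*pi} (\<lambda>t. f (c + of_real s * cis t))"
      by (rule set_integrable_subset[OF si]) auto
    have "(LINT t:{0..<2*pi}|lborel. f (c + of_real s * cis t)) = integral {0..<2*pi} (\<lambda>t. f (c + of_real s * cis t))"
      by (rule set_borel_integral_eq_integral(2)[OF si2])
    also have "\<dots> = h s" unfolding h_def
      by (rule integral_subset_negligible) auto
    finally show ?thesis unfolding e .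
  qed
  define k where "k s = s * (LINT t:{0..<2*pi}|lborel. ft (c + of_real s * cis t))" for s
  have kl: "set_integrable lborel {r..R} k" using P1 unfolding k_def .
  have kai: "k absolutely_integrable_on {r..R}"
  proof -
    have "(\<lambda>s. indicator {r..R} s *\<^sub>R k s) \<in> borel_measurable lborel"
      using kl unfolding set_integrable_def by (rule borel_measurable_integrable)
    then show ?thesis using kl unfolding set_integrable_def by (subst integrable_completion) auto
  qed
  have hkai: "(\<lambda>s. (1/s) * k s) absolutely_integrable_on {r..R}"
  proof (rule absolutely_integrable_bounded_measurable_product_real[OF _ _ _ kai])
    have co: "continuous_on {r..R} (\<lambda>s::real. 1/s)" using r by (intro continuous_intros) auto
    show "(\<lambda>s::real. 1/s) \<in> borel_measurable (lebesgue_on {r..R})"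
      by (rule continuous_imp_measurable_on_sets_lebesgue[OF co]) auto
    show "bounded ((\<lambda>s::real. 1/s) ` {r..R})"
      by (rule compact_imp_bounded[OF compact_continuous_image[OF co compact_Icc]])
  qed auto
  have k_eq: "k s = s * h s" if "s \<in> {r..R} - {R}" for s
    using that inner unfolding k_def by auto
  have hai: "h absolutely_integrable_on {r..R}"
    by (rule absolutely_integrable_spike[OF hkai, of "{R}"]) (use k_eq r in auto)
  have I_eq: "integral A f = integral {r..R} (\<lambda>s. s * h s)"
  proof -
    have "integral {r..R} (\<lambda>s. s * h s) = integral {r..R} k"
      by (rule integral_spike[of "{R}"]) (use k_eq in auto)
    also have "\<dots> = (LINT s:{r..R}|lborel. k s)"
      by (rule set_borel_integral_eq_integral(2)[OF kl, symmetric])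
    finally show ?thesis using int_ft int_ft2 P2 unfolding k_def by simp
  qed
  have pint: "(\<lambda>t. f (c + of_real s * cis t)) integrable_on {0..2*pi}" if "r \<le> s" "s \<le> R" for s
  proof (cases "s = R")
    case True then show ?thesis using fR by simp
  next
    case False
    then show ?thesis using that r
      by (intro integrable_continuous_interval continuous_on_subset[OF path_cont]) auto
  qed
  have hcv: "convex_on {r..R} h"
    unfolding convex_on_def
  proof (intro conjI ballI allI impI)
    fix x y u v :: real assume xy: "x \<in> {r..R}" "y \<in> {r..R}" and uv: "0 \<le> u" "0 \<le> v" "u + v = 1"
    have pt: "f (c + of_real (u *\<^sub>R x + v *\<^sub>R y) * cis t) \<le> u * f (c + of_real x * cis t) + v * f (c + of_real y * cis t)" for t
    proof -
      have "c + of_real (u *\<^sub>R x + v *\<^sub>R y) * cis t = u *\<^sub>R (c + of_real x * cis t) + v *\<^sub>R (c + of_real y * cis t)"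
      proof -
        have "c = u *\<^sub>R c + v *\<^sub>R c" using uv by (simp add: scaleR_left_distrib[symmetric])
        then show ?thesis by (simp add: scaleR_conv_of_real algebra_simps)
      qed
      moreover have "c + of_real x * cis t \<in> U" "c + of_real y * cis t \<in> U"
        using circ_A xy AU A_def by auto
      ultimately show ?thesis using cvf uv unfolding convex_on_def by auto
    qed
    have "h (u *\<^sub>R x + v *\<^sub>R y) \<le> integral {0..2*pi} (\<lambda>t. u * f (c + of_real x * cis t) + v * f (c + of_real y * cis t))"
      unfolding h_def
    proof (rule integral_le[OF pint _ pt])
      show "r \<le> u *\<^sub>R x + v *\<^sub>R y" "u *\<^sub>R x + v *\<^sub>R y \<le> R"
        using xy uv convex_real_interval(5)[of r R] unfolding convex_def by auto
      show "(\<lambda>t. u * f (c + of_real x * cis t) + v * f (c + of_real y * cis t)) integrable_on {0..2*pi}"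
        using pint xy by (intro integrable_add integrable_on_mult_right) auto
    qed
    also have "\<dots> = u * h x + v * h y"
      unfolding h_def using pint xy
      by (subst integral_add) (auto intro: integrable_on_mult_right)
    finally show "h (u *\<^sub>R x + v *\<^sub>R y) \<le> u * h x + v * h y" .
  qed (rule convex_real_interval)
  have measA: "measure lebesgue A = pi * (R^2 - r^2)"
  proof -
    have one_l: "set_integrable lborel A (\<lambda>_. 1::real)"
      using absolutely_integrable_on_const[OF Alm, of "1::real"] unfolding set_integrable_def
      by (subst (asm) integrable_completion) auto
    have "measure lebesgue A = integral A (\<lambda>_. 1::real)" by (rule lmeasure_integral[OF Alm])
    also have "\<dots> = (LINT z:A|lborel. (1::real))"
      by (rule set_borel_integral_eq_integral(2)[OF one_l, symmetric])
    also have "\<dots> = (LINT s:{r..R}|lborel. s * (LINT t:{0..<2*pi}|lborel. (1::real)))"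
      using polar2(2)[OF r borel_measurable_const one_l[unfolded A_def]] unfolding A_def by simp
    also have "\<dots> = (LINT s:{r..R}|lborel. s * (2*pi))"
      by (subst set_integral_const) auto
    also have "\<dots> = integral {r..R} (\<lambda>s. s * (2*pi))"
      by (rule set_borel_integral_eq_integral(2)[OF borel_integrable_atLeastAtMost'])
         (intro continuous_intros)
    also have "\<dots> = pi * R^2 - pi * r^2"
      by (rule poly_integral(1)[of r R "\<lambda>s. pi * s^2"]) (use rR in \<open>auto intro!: derivative_eq_intros\<close>)
    finally show ?thesis by (simp add: algebra_simps)
  qed
  have ac: "avg_circle f c s = h s / (2*pi)" if "0 < s" for s
    using that unfolding avg_circle_def h_def by simp
  have m1: "0 < (2*r + R)/3" "0 < (r + 2*R)/3" using r rR by auto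
  have key: "integral A f \<le> (R - r) * ((2*r + R)/9 * h r + r/6 * h ((2*r + R)/3) + R/6 * h ((r + 2*R)/3) + (r + 2*R)/9 * h R)"
    unfolding I_eq by (rule oneD[OF r rR hcv hai])
  have pos: "0 < pi * (R^2 - r^2)" using r rR by (simp add: power_strict_mono)
  have "avg_area f (annulus c r R) = integral A f / (pi * (R^2 - r^2))"
    unfolding avg_area_def A_def[symmetric] measA ..
  also have "\<dots> \<le> (R - r) * ((2*r + R)/9 * h r + r/6 * h ((2*r + R)/3) + R/6 * h ((r + 2*R)/3) + (r + 2*R)/9 * h R) / (pi * (R^2 - r^2))"
    using key pos by (intro divide_right_mono) auto
  also have "\<dots> = (1/3) * (R / (r + R) * (h ((r + 2*R) / 3) / (2*pi))
             + r / (r + R) * (h ((2*r + R) / 3) / (2*pi)))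
    + (2/3) * ((r + 2*R) / (3*(r + R)) * (h R / (2*pi))
             + (2*r + R) / (3*(r + R)) * (h r / (2*pi)))"
    by (rule alg_final) (use r rR in auto)
  finally show ?thesis using r rR m1 by (simp add: ac)
qed

end
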